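(* Let $(P,A,\lambda)$ be a marked poset, $(U_1,U_2)$ an admissible decomposition, $A_1=A\cup U_1$, and let $\pi_1:\mathbb{R}^{P\setminus A}\to\mathbb{R}^{U_1}$, $\pi_2:\mathbb{R}^{P\setminus A}\to\mathbb{R}^{U_2}$ be the coordinate projections. For a point $s$, let $\lambda^s:A_1\to\mathbb{R}$ be given by $\lambda^s(p)=\lambda_p$ for $p\in A$ and $\lambda^s(p)=s_p$ for $p\in U_1$. Then: (1) for $s\in\mathcal{O}_{P,A}(\lambda)$, $\{\pi_2(y): y\in\mathcal{O}_{P,A}(\lambda),\ \pi_1(y)=\pi_1(s)\}=\mathcal{O}_{P,A_1}(\lambda^s)$; (2) for $s\in\mathcal{CO}_{U_1,U_2}(\lambda)$, $\{\pi_2(y): y\in\mathcal{CO}_{U_1,U_2}(\lambda),\ \pi_1(y)=\pi_1(s)\}=\mathcal{C}_{P,A_1}(\lambda^s)$.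
   Context: A marked poset is a triple $(P,A,\lambda)$ where $(P,\prec)$ is a finite poset, $A\subseteq P$ contains all minimal and all maximal elements of $P$, and $\lambda:A\to\mathbb{Z}_{\ge 0}$, $a\mapsto\lambda_a$. A decomposition of $(P,A,\lambda)$ is a pair $(U_1,U_2)$ of disjoint sets with $U_1\cup U_2=P\setminus A$; it is admissible if there are no $u_1\in U_1$, $u_2\in U_2$ with $u_1\prec u_2$. For any such $(P,A)$, real-valued $\lambda$ on $A$, and decomposition $(U_1,U_2)$ of $P\setminus A$, the marked chain-order polytope $\mathcal{CO}_{U_1,U_2}(\lambda)\subset\mathbb{R}^{P\setminus A}$ is the set of $(x_p)_{p\in P\setminus A}$ such that: (i) $x_p\le\lambda_a$ whenever $p\in U_1$, $a\in A$, $p\prec a$; (ii) $\lambda_b\le x_q$ whenever $q\in U_1$, $b\in A$, $b\prec q$; (iii) $x_p\le x_q$ whenever $p,q\in U_1$, $p\prec q$; (iv) $x_p\ge0$ for $p\in U_2$; (v) for every chain $b\prec p_n\prec\cdots\prec p_1\prec a$ with $n\ge1$, $a,b\in A\cup U_1$, $p_i\in U_2$: $x_{p_1}+\cdots+x_{p_n}\le\lambda_a-\lambda_b$, where $\lambda_q$ means $x_q$ for $q\in U_1$; (vi) for every chain $p_1\prec\cdots\prec p_s\prec q$ with $q\in U_1$, $p_i\in U_2$: $x_{p_1}+\cdots+x_{p_s}\le x_q$. The marked order polytope is $\mathcal{O}_{P,A}(\lambda)=\mathcal{CO}_{P\setminus A,\emptyset}(\lambda)$ and the marked chain polytope is $\mathcal{C}_{P,A}(\lambda)=\mathcal{CO}_{\emptyset,P\setminus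 A}(\lambda)$. Accordingly $\mathcal{O}_{P,A_1}(\lambda^s)$ and $\mathcal{C}_{P,A_1}(\lambda^s)$ are the marked order and marked chain polytopes of $P$ with marked set $A_1$ and marking $\lambda^s$; they lie in $\mathbb{R}^{P\setminus A_1}=\mathbb{R}^{U_2}$. *)

theory Defs
  imports Complex_Main "HOL-Library.FuncSet"
begin

text \<open>Points of R^(P - A) are functions 'a => real that are extensional on P - A
  (i.e. take the value undefined outside P - A).\<close>

definition marked_poset :: "'a set \<Rightarrow> ('a \<Rightarrow> 'a \<Rightarrow> bool) \<Rightarrow> 'a set \<Rightarrow> ('a \<Rightarrow> real) \<Rightarrow> bool" where
  "marked_poset P prec A lam \<longleftrightarrow>
     finite P
   \<and> (\<forall>p\<in>P. \<not> prec p p)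
   \<and> (\<forall>p\<in>P. \<forall>q\<in>P. \<forall>r\<in>P. prec p q \<and> prec q r \<longrightarrow> prec p r)
   \<and> A \<subseteq> P
   \<and> (\<forall>p\<in>P. (\<not> (\<exists>q\<in>P. prec q p)) \<longrightarrow> p \<in> A)
   \<and> (\<forall>p\<in>P. (\<not> (\<exists>q\<in>P. prec p q)) \<longrightarrow> p \<in> A)
   \<and> (\<forall>a\<in>A. lam a \<in> \<nat>)"

definition admissible_decomp :: "'a set \<Rightarrow> ('a \<Rightarrow> 'a \<Rightarrow> bool) \<Rightarrow> 'a set \<Rightarrow> 'a set \<Rightarrow> 'a set \<Rightarrow> bool" where
  "admissible_decomp P prec A U1 U2 \<longleftrightarrow>
     U1 \<inter> U2 = {} \<and> U1 \<union> U2 = P - A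
   \<and> \<not> (\<exists>u1\<in>U1. \<exists>u2\<in>U2. prec u1 u2)"

text \<open>Marked chain-order polytope CO_{U1,U2}(lam).  A chain b < p_n < ... < p_1 < a
  is encoded as a list ps (listed increasingly) with sorted_wrt prec (b # ps @ [a]).\<close>

definition chain_order_polytope ::
  "'a set \<Rightarrow> ('a \<Rightarrow> 'a \<Rightarrow> bool) \<Rightarrow> 'a set \<Rightarrow> ('a \<Rightarrow> real) \<Rightarrow> 'a set \<Rightarrow> 'a set \<Rightarrow> ('a \<Rightarrow> real) set" where
  "chain_order_polytope P prec A lam U1 U2 =
    {x \<in> extensional (P - A).
       (\<forall>p\<in>U1. \<forall>a\<in>A. prec p a \<longrightarrow> x p \<le> lam a)
     \<and> (\<forall>q\<in>U1. \<forall>b\<in>A. prec b q \<longrightarrow> lam b \<le> x q)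
     \<and> (\<forall>p\<in>U1. \<forall>q\<in>U1. prec p q \<longrightarrow> x p \<le> x q)
     \<and> (\<forall>p\<in>U2. 0 \<le> x p)
     \<and> (\<forall>a\<in>A \<union> U1. \<forall>b\<in>A \<union> U1. \<forall>ps. ps \<noteq> [] \<and> set ps \<subseteq> U2
            \<and> sorted_wrt prec (b # ps @ [a]) \<longrightarrow>
            sum_list (map x ps) \<le> (if a \<in> U1 then x a else lam a) - (if b \<in> U1 then x b else lam b))
     \<and> (\<forall>q\<in>U1. \<forall>ps. ps \<noteq> [] \<and> set ps \<subseteq> U2 \<and> sorted_wrt prec (ps @ [q]) \<longrightarrow>
            sum_list (map x ps) \<le> x q)}"

definition marked_order_polytope ::
  "'a set \<Rightarrow> ('a \<Rightarrow> 'a \<Rightarrow> bool) \<Rightarrow> 'a set \<Rightarrow> ('a \<Rightarrow> real) \<Rightarrow> ('a \<Rightarrow> real) set" where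
  "marked_order_polytope P prec A lam = chain_order_polytope P prec A lam (P - A) {}"

definition marked_chain_polytope ::
  "'a set \<Rightarrow> ('a \<Rightarrow> 'a \<Rightarrow> bool) \<Rightarrow> 'a set \<Rightarrow> ('a \<Rightarrow> real) \<Rightarrow> ('a \<Rightarrow> real) set" where
  "marked_chain_polytope P prec A lam = chain_order_polytope P prec A lam {} (P - A)"

definition marking_s :: "'a set \<Rightarrow> ('a \<Rightarrow> real) \<Rightarrow> ('a \<Rightarrow> real) \<Rightarrow> 'a \<Rightarrow> real" where
  "marking_s U1 lam s = (\<lambda>p. if p \<in> U1 then s p else lam p)"

end

theory Submission
  imports Defs
begin


lemma p1_fwd:
  assumes dis: "U1 \<inter> U2 = {}" and un: "U1 \<union> U2 = P - A"
    and y: "y \<in> marked_order_polytope P prec A lam"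
    and ys: "\<And>p. p \<in> U1 \<Longrightarrow> y p = s p"
  shows "restrict y U2 \<in> marked_order_polytope P prec (A \<union> U1) (marking_s U1 lam s)"
proof -
  have U2eq: "P - (A \<union> U1) = U2" using dis un by blast
  from y have y1: "\<forall>p\<in>P-A. \<forall>a\<in>A. prec p a \<longrightarrow> y p \<le> lam a"
    and y2: "\<forall>q\<in>P-A. \<forall>b\<in>A. prec b q \<longrightarrow> lam b \<le> y q"
    and y3: "\<forall>p\<in>P-A. \<forall>q\<in>P-A. prec p q \<longrightarrow> y p \<le> y q"
    unfolding marked_order_polytope_def chain_order_polytope_def by simp_all
  have y4: "\<forall>p\<in>U2. \<forall>a\<in>U1. prec p a \<longrightarrow> y p \<le> s a"
    using y3 un ys by (metis Un_iff)
  have y5: "\<forall>p\<in>U2. \<forall>a\<in>U1. prec a p \<longrightarrow> s a \<le> y p"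
    using y3 un ys by (metis Un_iff)
  show ?thesis
    unfolding marked_order_polytope_def chain_order_polytope_def U2eq
    apply (intro CollectI conjI)
    subgoal by simp
    subgoal using y1 y4 un unfolding marking_s_def by auto
    subgoal using y2 y5 un unfolding marking_s_def by auto
    subgoal using y3 un by auto
    subgoal by simp
    subgoal by simp
    subgoal by simp
    done
qed



lemma p1_bwd:
  assumes dis: "U1 \<inter> U2 = {}" and un: "U1 \<union> U2 = P - A"
    and s: "s \<in> marked_order_polytope P prec A lam"
    and z: "z \<in> marked_order_polytope P prec (A \<union> U1) (marking_s U1 lam s)"
  shows "restrict (\<lambda>p. if p \<in> U1 then s p else z p) (P - A) \<in> marked_order_polytope P prec A lam"
proof -
  have U2eq: "P - (A \<union> U1) = U2" using dis un by blast
  from s have s1: "\<forall>p\<in>P-A. \<forall>a\<in>A. prec p a \<longrightarrow> s p \<le> lam a"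
    and s2: "\<forall>q\<in>P-A. \<forall>b\<in>A. prec b q \<longrightarrow> lam b \<le> s q"
    and s3: "\<forall>p\<in>P-A. \<forall>q\<in>P-A. prec p q \<longrightarrow> s p \<le> s q"
    unfolding marked_order_polytope_def chain_order_polytope_def by simp_all
  from z have z1: "\<forall>p\<in>U2. \<forall>a\<in>A \<union> U1. prec p a \<longrightarrow> z p \<le> marking_s U1 lam s a"
    and z2: "\<forall>q\<in>U2. \<forall>b\<in>A \<union> U1. prec b q \<longrightarrow> marking_s U1 lam s b \<le> z q"
    and z3: "\<forall>p\<in>U2. \<forall>q\<in>U2. prec p q \<longrightarrow> z p \<le> z q"
    unfolding marked_order_polytope_def chain_order_polytope_def U2eq by simp_all
  have disA: "U1 \<inter> A = {}" "U2 \<inter> A = {}" using un by auto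
  have cov: "\<And>p. p \<in> P \<Longrightarrow> p \<notin> A \<Longrightarrow> p \<notin> U1 \<Longrightarrow> p \<in> U2" using un by blast
  have z1a: "\<forall>p\<in>U2. \<forall>a\<in>A. prec p a \<longrightarrow> z p \<le> lam a"
  proof (intro ballI impI)
    fix p a assume h: "p \<in> U2" "a \<in> A" "prec p a"
    then have "a \<notin> U1" using disA by blast
    then show "z p \<le> lam a" using z1 h unfolding marking_s_def by force
  qed
  have z1u: "\<forall>p\<in>U2. \<forall>a\<in>U1. prec p a \<longrightarrow> z p \<le> s a"
    using z1 unfolding marking_s_def by force
  have z2a: "\<forall>q\<in>U2. \<forall>b\<in>A. prec b q \<longrightarrow> lam b \<le> z q"
  proof (intro ballI impI)
    fix p a assume h: "p \<in> U2" "a \<in> A" "prec a p"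
    then have "a \<notin> U1" using disA by blast
    then show "lam a \<le> z p" using z2 h unfolding marking_s_def by force
  qed
  have z2u: "\<forall>q\<in>U2. \<forall>b\<in>U1. prec b q \<longrightarrow> s b \<le> z q"
    using z2 unfolding marking_s_def by force
  show ?thesis
    unfolding marked_order_polytope_def chain_order_polytope_def
    apply (intro CollectI conjI)
    subgoal by simp
    subgoal using s1 z1a un cov by auto
    subgoal using s2 z2a un cov by auto
    subgoal using s3 z1u z2u z3 un cov by auto
    subgoal by simp
    subgoal by simp
    subgoal by simp
    done
qed



lemma map_restrict: "set ps \<subseteq> U \<Longrightarrow> map (restrict y U) ps = map y ps"
  by (induction ps) auto

lemma p2_fwd:
  assumes dis: "U1 \<inter> U2 = {}" and un: "U1 \<union> U2 = P - A"
    and y: "y \<in> chain_order_polytope P prec A lam U1 U2"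
    and ys: "\<And>p. p \<in> U1 \<Longrightarrow> y p = s p"
  shows "restrict y U2 \<in> marked_chain_polytope P prec (A \<union> U1) (marking_s U1 lam s)"
proof -
  have U2eq: "P - (A \<union> U1) = U2" using dis un by blast
  from y have y4: "\<forall>p\<in>U2. 0 \<le> y p"
    and y5: "\<forall>a\<in>A \<union> U1. \<forall>b\<in>A \<union> U1. \<forall>ps. ps \<noteq> [] \<and> set ps \<subseteq> U2
            \<and> sorted_wrt prec (b # ps @ [a]) \<longrightarrow>
            sum_list (map y ps) \<le> (if a \<in> U1 then y a else lam a) - (if b \<in> U1 then y b else lam b)"
    unfolding chain_order_polytope_def by simp_all
  have y5': "\<forall>a\<in>A \<union> U1. \<forall>b\<in>A \<union> U1. \<forall>ps. ps \<noteq> [] \<and> set ps \<subseteq> U2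
            \<and> sorted_wrt prec (b # ps @ [a]) \<longrightarrow>
            sum_list (map (restrict y U2) ps) \<le> marking_s U1 lam s a - marking_s U1 lam s b"
  proof (intro ballI allI impI)
    fix a b ps assume h: "a \<in> A \<union> U1" "b \<in> A \<union> U1" "ps \<noteq> [] \<and> set ps \<subseteq> U2
            \<and> sorted_wrt prec (b # ps @ [a])"
    have "sum_list (map y ps) \<le> (if a \<in> U1 then y a else lam a) - (if b \<in> U1 then y b else lam b)"
      using y5 h by blast
    moreover have m: "map (restrict y U2) ps = map y ps" using h map_restrict by blast
    ultimately show "sum_list (map (restrict y U2) ps) \<le> marking_s U1 lam s a - marking_s U1 lam s b"
      unfolding marking_s_def m using ys by (auto split: if_splits)
  qed
  show ?thesis
    unfolding marked_chain_polytope_def chain_order_polytope_def U2eq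
    apply (intro CollectI conjI)
    subgoal by simp
    subgoal by simp
    subgoal by simp
    subgoal by simp
    subgoal using y4 by simp
    subgoal using y5' by simp
    subgoal by simp
    done
qed





lemma min_below:
  assumes fin: "finite P" and irr: "\<forall>p\<in>P. \<not> prec p p"
    and tr: "\<forall>p\<in>P. \<forall>q\<in>P. \<forall>r\<in>P. prec p q \<and> prec q r \<longrightarrow> prec p r"
  shows "p \<in> P \<Longrightarrow> \<exists>b\<in>P. (b = p \<or> prec b p) \<and> \<not> (\<exists>q\<in>P. prec q b)"
proof (induction "card {q\<in>P. prec q p}" arbitrary: p rule: less_induct)
  case less
  show ?case
  proof (cases "\<exists>q\<in>P. prec q p")
    case False thus ?thesis using less.prems by blast
  next
    case True
    then obtain q where q: "q \<in> P" "prec q p" by blast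
    have sub: "{r\<in>P. prec r q} \<subset> {r\<in>P. prec r p}"
      using q tr irr less.prems by blast
    have "card {r\<in>P. prec r q} < card {r\<in>P. prec r p}"
      using sub fin by (simp add: psubset_card_mono)
    from less.hyps[OF this q(1)] obtain b where
      "b \<in> P" "b = q \<or> prec b q" "\<not> (\<exists>q\<in>P. prec q b)" by blast
    thus ?thesis using q tr less.prems by blast
  qed
qed

lemma sorted_cons_trans:
  assumes tr: "\<forall>p\<in>P. \<forall>q\<in>P. \<forall>r\<in>P. prec p q \<and> prec q r \<longrightarrow> prec p r"
    and "set (p # xs) \<subseteq> P" "b \<in> P" "prec b p" "sorted_wrt prec (p # xs)"
  shows "sorted_wrt prec (b # p # xs)"
proof -
  have "\<forall>x\<in>set xs. prec b x"
  proof
    fix x assume x: "x \<in> set xs"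
    have "prec p x" using assms(5) x by simp
    moreover have "x \<in> P" "p \<in> P" using assms(2) x by auto
    ultimately show "prec b x" using tr assms(3,4) by blast
  qed
  thus ?thesis using assms(4,5) by simp
qed

lemma p2_bwd:
  assumes dis: "U1 \<inter> U2 = {}" and un: "U1 \<union> U2 = P - A"
    and fin: "finite P" and irr: "\<forall>p\<in>P. \<not> prec p p"
    and tr: "\<forall>p\<in>P. \<forall>q\<in>P. \<forall>r\<in>P. prec p q \<and> prec q r \<longrightarrow> prec p r"
    and minA: "\<forall>p\<in>P. (\<not> (\<exists>q\<in>P. prec q p)) \<longrightarrow> p \<in> A"
    and lam0: "\<forall>a\<in>A. 0 \<le> lam a"
    and s: "s \<in> chain_order_polytope P prec A lam U1 U2"
    and z: "z \<in> marked_chain_polytope P prec (A \<union> U1) (marking_s U1 lam s)"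
  shows "restrict (\<lambda>p. if p \<in> U1 then s p else z p) (P - A) \<in> chain_order_polytope P prec A lam U1 U2"
proof -
  define y where "y = restrict (\<lambda>p. if p \<in> U1 then s p else z p) (P - A)"
  have U2eq: "P - (A \<union> U1) = U2" using dis un by blast
  have yU1: "\<And>p. p \<in> U1 \<Longrightarrow> y p = s p" and yU2: "\<And>p. p \<in> U2 \<Longrightarrow> y p = z p"
    unfolding y_def using un dis by auto
  from s have s1: "\<forall>p\<in>U1. \<forall>a\<in>A. prec p a \<longrightarrow> s p \<le> lam a"
    and s2: "\<forall>q\<in>U1. \<forall>b\<in>A. prec b q \<longrightarrow> lam b \<le> s q"
    and s3: "\<forall>p\<in>U1. \<forall>q\<in>U1. prec p q \<longrightarrow> s p \<le> s q"
    unfolding chain_order_polytope_def by simp_all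
  from z have z4: "\<forall>p\<in>U2. 0 \<le> z p"
    and z5: "\<forall>a\<in>A \<union> U1. \<forall>b\<in>A \<union> U1. \<forall>ps. ps \<noteq> [] \<and> set ps \<subseteq> U2
            \<and> sorted_wrt prec (b # ps @ [a]) \<longrightarrow>
            sum_list (map z ps) \<le> marking_s U1 lam s a - marking_s U1 lam s b"
    unfolding marked_chain_polytope_def chain_order_polytope_def U2eq by simp_all
  have mapy: "\<And>ps. set ps \<subseteq> U2 \<Longrightarrow> map y ps = map z ps"
    using yU2 by (auto simp: map_eq_conv)
  have y5: "\<forall>a\<in>A \<union> U1. \<forall>b\<in>A \<union> U1. \<forall>ps. ps \<noteq> [] \<and> set ps \<subseteq> U2
            \<and> sorted_wrt prec (b # ps @ [a]) \<longrightarrow>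
            sum_list (map y ps) \<le> (if a \<in> U1 then y a else lam a) - (if b \<in> U1 then y b else lam b)"
  proof (intro ballI allI impI)
    fix a b ps assume h: "a \<in> A \<union> U1" "b \<in> A \<union> U1" "ps \<noteq> [] \<and> set ps \<subseteq> U2
            \<and> sorted_wrt prec (b # ps @ [a])"
    have "sum_list (map z ps) \<le> marking_s U1 lam s a - marking_s U1 lam s b"
      using z5[rule_format, of a b ps] h by blast
    moreover have m: "map y ps = map z ps" using h mapy by blast
    ultimately show "sum_list (map y ps) \<le> (if a \<in> U1 then y a else lam a) - (if b \<in> U1 then y b else lam b)"
      unfolding marking_s_def m using yU1 by (auto split: if_splits)
  qed
  have y6: "\<forall>q\<in>U1. \<forall>ps. ps \<noteq> [] \<and> set ps \<subseteq> U2 \<and> sorted_wrt prec (ps @ [q]) \<longrightarrow>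
            sum_list (map y ps) \<le> y q"
  proof (intro ballI allI impI)
    fix q ps assume q: "q \<in> U1" and h: "ps \<noteq> [] \<and> set ps \<subseteq> U2 \<and> sorted_wrt prec (ps @ [q])"
    then obtain p xs where pxs: "ps = p # xs" by (cases ps) auto
    have pU2: "p \<in> U2" using h pxs by auto
    hence pP: "p \<in> P" "p \<notin> A" using un by auto
    obtain b where b: "b \<in> P" "b = p \<or> prec b p" "\<not> (\<exists>q\<in>P. prec q b)"
      using min_below[OF fin irr tr pP(1)] by blast
    have bA: "b \<in> A" using minA b by blast
    hence bp: "prec b p" using b pP by auto
    have setP: "set (ps @ [q]) \<subseteq> P" using h q un by auto
    have s0: "sorted_wrt prec (p # xs @ [q])" using h pxs by simp
    have s1: "set (p # xs @ [q]) \<subseteq> P" using setP pxs by simp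
    have "sorted_wrt prec (b # p # xs @ [q])"
      by (rule sorted_cons_trans[OF tr s1 b(1) bp s0])
    hence "sorted_wrt prec (b # ps @ [q])" using pxs by simp
    hence "sum_list (map z ps) \<le> marking_s U1 lam s q - marking_s U1 lam s b"
      using z5[rule_format, of q b ps] h q bA by blast
    moreover have "b \<notin> U1" using bA un by auto
    ultimately have "sum_list (map z ps) \<le> s q - lam b" using q unfolding marking_s_def by simp
    moreover have mm: "map y ps = map z ps" using mapy h by blast
    moreover have "sum_list (map y ps) = sum_list (map z ps)" by (simp only: mm)
    moreover have "y q = s q" using yU1 q by blast
    moreover have "0 \<le> lam b" using lam0 bA by blast
    ultimately show "sum_list (map y ps) \<le> y q" by linarith
  qed
  have "y \<in> chain_order_polytope P prec A lam U1 U2"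
    unfolding chain_order_polytope_def
    apply (intro CollectI conjI)
    subgoal unfolding y_def by simp
    subgoal using s1 yU1 by simp
    subgoal using s2 yU1 by simp
    subgoal using s3 yU1 by simp
    subgoal using z4 yU2 by simp
    subgoal using y5 by simp
    subgoal using y6 by simp
    done
  thus ?thesis unfolding y_def .
qed


theorem lemma1p15:
  fixes P A U1 U2 :: "'a set" and prec :: "'a \<Rightarrow> 'a \<Rightarrow> bool" and lam :: "'a \<Rightarrow> real"
  assumes "marked_poset P prec A lam"
    and "admissible_decomp P prec A U1 U2"
  shows "(\<forall>s \<in> marked_order_polytope P prec A lam.
            (\<lambda>y. restrict y U2) ` {y \<in> marked_order_polytope P prec A lam. restrict y U1 = restrict s U1}
            = marked_order_polytope P prec (A \<union> U1) (marking_s U1 lam s))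
       \<and> (\<forall>s \<in> chain_order_polytope P prec A lam U1 U2.
            (\<lambda>y. restrict y U2) ` {y \<in> chain_order_polytope P prec A lam U1 U2. restrict y U1 = restrict s U1}
            = marked_chain_polytope P prec (A \<union> U1) (marking_s U1 lam s))"
proof -
  have fin: "finite P"
    using assms(1) unfolding marked_poset_def by (elim conjE)
  have irr: "\<forall>p\<in>P. \<not> prec p p"
    using assms(1) unfolding marked_poset_def by (elim conjE)
  have tr: "\<forall>p\<in>P. \<forall>q\<in>P. \<forall>r\<in>P. prec p q \<and> prec q r \<longrightarrow> prec p r"
    using assms(1) unfolding marked_poset_def by (elim conjE)
  have minA: "\<forall>p\<in>P. (\<not> (\<exists>q\<in>P. prec q p)) \<longrightarrow> p \<in> A"
    using assms(1) unfolding marked_poset_def by (elim conjE)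
  have lamN: "\<forall>a\<in>A. lam a \<in> \<nat>"
    using assms(1) unfolding marked_poset_def by (elim conjE)
  have dis: "U1 \<inter> U2 = {}"
    using assms(2) unfolding admissible_decomp_def by (elim conjE)
  have un: "U1 \<union> U2 = P - A"
    using assms(2) unfolding admissible_decomp_def by (elim conjE)
  have lam0: "\<forall>a\<in>A. 0 \<le> lam a"
  proof
    fix a assume "a \<in> A"
    hence "lam a \<in> \<nat>" using lamN by blast
    then obtain n where "lam a = of_nat n" by (erule Nats_cases)
    thus "0 \<le> lam a" by simp
  qed
  have U2eq: "P - (A \<union> U1) = U2" using dis un by blast
  have ext: "restrict (restrict (\<lambda>p. if p \<in> U1 then s p else z p) (P - A)) U2 = z"
    if zE: "z \<in> extensional U2" for s z
  proof
    fix x show "restrict (restrict (\<lambda>p. if p \<in> U1 then s p else z p) (P - A)) U2 x = z x"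
    proof (cases "x \<in> U2")
      case True
      hence "x \<in> P - A" "x \<notin> U1" using un dis by auto
      thus ?thesis using True by simp
    next
      case False
      have "z x = undefined" by (rule extensional_arb[OF zE False])
      thus ?thesis using False by simp
    qed
  qed
  have rU1: "restrict (restrict (\<lambda>p. if p \<in> U1 then s p else z p) (P - A)) U1 = restrict s U1" for s z
  proof
    fix x show "restrict (restrict (\<lambda>p. if p \<in> U1 then s p else z p) (P - A)) U1 x = restrict s U1 x"
    proof (cases "x \<in> U1")
      case True
      hence "x \<in> P - A" using un by auto
      thus ?thesis using True by simp
    next
      case False thus ?thesis by simp
    qed
  qed
  have eqU1: "y p = s p" if "restrict y U1 = restrict s U1" "p \<in> U1" for s y p
  proof -
    have "restrict y U1 p = restrict s U1 p" using that(1) by (rule fun_cong)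
    thus ?thesis using that(2) by simp
  qed
  show ?thesis
  proof (intro conjI ballI equalityI subsetI)
    fix s z assume s: "s \<in> marked_order_polytope P prec A lam"
      and "z \<in> (\<lambda>y. restrict y U2) ` {y \<in> marked_order_polytope P prec A lam. restrict y U1 = restrict s U1}"
    then obtain y where y: "y \<in> marked_order_polytope P prec A lam" and yr: "restrict y U1 = restrict s U1"
      and zy: "z = restrict y U2" by blast
    have "\<And>p. p \<in> U1 \<Longrightarrow> y p = s p" using eqU1[OF yr] .
    from p1_fwd[OF dis un y this] show "z \<in> marked_order_polytope P prec (A \<union> U1) (marking_s U1 lam s)"
      unfolding zy .
  next
    fix s z assume s: "s \<in> marked_order_polytope P prec A lam"
      and z: "z \<in> marked_order_polytope P prec (A \<union> U1) (marking_s U1 lam s)"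
    have zE: "z \<in> extensional U2" using z unfolding marked_order_polytope_def chain_order_polytope_def U2eq by blast
    define y where "y = restrict (\<lambda>p. if p \<in> U1 then s p else z p) (P - A)"
    have "y \<in> {y \<in> marked_order_polytope P prec A lam. restrict y U1 = restrict s U1}"
      using p1_bwd[OF dis un s z] rU1 unfolding y_def by blast
    moreover have "z = restrict y U2" using ext[OF zE] unfolding y_def by simp
    ultimately show "z \<in> (\<lambda>y. restrict y U2) ` {y \<in> marked_order_polytope P prec A lam. restrict y U1 = restrict s U1}"
      by blast
  next
    fix s z assume s: "s \<in> chain_order_polytope P prec A lam U1 U2"
      and "z \<in> (\<lambda>y. restrict y U2) ` {y \<in> chain_order_polytope P prec A lam U1 U2. restrict y U1 = restrict s U1}"
    then obtain y where y: "y \<in> chain_order_polytope P prec A lam U1 U2" and yr: "restrict y U1 = restrict s U1"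
      and zy: "z = restrict y U2" by blast
    have "\<And>p. p \<in> U1 \<Longrightarrow> y p = s p" using eqU1[OF yr] .
    from p2_fwd[OF dis un y this] show "z \<in> marked_chain_polytope P prec (A \<union> U1) (marking_s U1 lam s)"
      unfolding zy .
  next
    fix s z assume s: "s \<in> chain_order_polytope P prec A lam U1 U2"
      and z: "z \<in> marked_chain_polytope P prec (A \<union> U1) (marking_s U1 lam s)"
    have zE: "z \<in> extensional U2" using z unfolding marked_chain_polytope_def chain_order_polytope_def U2eq by blast
    define y where "y = restrict (\<lambda>p. if p \<in> U1 then s p else z p) (P - A)"
    have "y \<in> {y \<in> chain_order_polytope P prec A lam U1 U2. restrict y U1 = restrict s U1}"
      using p2_bwd[OF dis un fin irr tr minA lam0 s z] rU1 unfolding y_def by blast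
    moreover have "z = restrict y U2" using ext[OF zE] unfolding y_def by simp
    ultimately show "z \<in> (\<lambda>y. restrict y U2) ` {y \<in> chain_order_polytope P prec A lam U1 U2. restrict y U1 = restrict s U1}"
      by blast
  qed
qed

end
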